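(* Let $X$ be a set and let ${}^{*}X$ be a topological extension of $X$. Then: (1) ${}^{*}X$ satisfies the principle Ind if and only if ${}^{*}X$ is a Hausdorff space; (2) ${}^{*}X$ satisfies the principle Poss if and only if the $S$-topology of ${}^{*}X$ is quasi-compact; (3) ${}^{*}X$ satisfies both Ind and Poss if and only if the $S$-topology of ${}^{*}X$ is compact (i.e. Hausdorff and quasi-compact). Consequently, in this case either ${}^{*}X$ (with its original topology) is compact, or ${}^{*}X$ is not regular, and then the coarser $S$-topology on ${}^{*}X$ is compact and every ${}^{*}f$ (for $f:X\to X$) is still continuous with respect to the $S$-topology.
   Context: A topological extension of a set $X$ is a $T_1$ topological space ${}^{*}X$ containing $X$ as a discrete dense subspace, together with an assignment to each function $f:X\to X$ of a continuous map ${}^{*}f:{}^{*}X\to{}^{*}X$ extending $f$, such that (c) ${}^{*}g\circ{}^{*}f={}^{*}(g\circ f)$ for all $f,g:X\to X$, and (i) if $f(x)=x$ for all $x\in A\subseteq X$, then ${}^{*}f(\xi)=\xi$ for all $\xi$ in the closure $\overline{A}$ of $A$ in ${}^{*}X$. For $A\subseteq X$ write ${}^{*}A=\overline{A}$ (the closure of $A$ in ${}^{*}X$; it is clopen). The $S$-topology on ${}^{*}X$ is the topology generated by the sets ${}^{*}A$, $A\subseteq X$. Principle Ind: for any two distinct $\xi,\eta\in{}^{*}X$ there is $A\subseteq X$ with $\xi\in{}^{*}A$ and $\eta\notin{}^{*}A$. Principle Poss: for every family $\mathcal F$ of subsets of $X$, if $\bigcap_{A\in\mathcal F}{}^{*}A=\emptyset$,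 then there are finitely many $A_1,\dots,A_n\in\mathcal F$ with $A_1\cap\dots\cap A_n=\emptyset$. "Compact" means Hausdorff and quasi-compact. *)

theory Defs
  imports "HOL-Analysis.Analysis"
begin

(* The star-X is the carrier topspace T of a topology T on a type containing X.
  star assigns to each f a map star f on topspace T. *)

definition topological_extension ::
  "'a set \<Rightarrow> 'a topology \<Rightarrow> (('a \<Rightarrow> 'a) \<Rightarrow> ('a \<Rightarrow> 'a)) \<Rightarrow> bool" where
  "topological_extension X T star \<longleftrightarrow>
     t1_space T \<and>
     X \<subseteq> topspace T \<and>
     subtopology T X = discrete_topology X \<and>
     T closure_of X = topspace T \<and>
     (\<forall>f \<in> X \<rightarrow>\<^sub>E X. continuous_map T T (star f) \<and> (\<forall>x\<in>X. star f x = f x)) \<and>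
     (\<forall>f \<in> X \<rightarrow>\<^sub>E X. \<forall>g \<in> X \<rightarrow>\<^sub>E X. \<forall>\<xi> \<in> topspace T.
         star g (star f \<xi>) = star (restrict (g \<circ> f) X) \<xi>) \<and>
     (\<forall>f \<in> X \<rightarrow>\<^sub>E X. \<forall>A. A \<subseteq> X \<longrightarrow> (\<forall>x\<in>A. f x = x) \<longrightarrow>
         (\<forall>\<xi> \<in> T closure_of A. star f \<xi> = \<xi>))"

(* The S-topology: generated by the sets star A = closure of A, A <= X. *)
definition S_topology :: "'a set \<Rightarrow> 'a topology \<Rightarrow> 'a topology" where
  "S_topology X T = topology_generated_by {T closure_of A | A. A \<subseteq> X}"

definition principle_Ind :: "'a set \<Rightarrow> 'a topology \<Rightarrow> bool" where
  "principle_Ind X T \<longleftrightarrow>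
     (\<forall>\<xi> \<in> topspace T. \<forall>\<eta> \<in> topspace T. \<xi> \<noteq> \<eta> \<longrightarrow>
        (\<exists>A. A \<subseteq> X \<and> \<xi> \<in> T closure_of A \<and> \<eta> \<notin> T closure_of A))"

(* Poss; a finite subfamily with empty intersection (the intersection of
  the empty subfamily is read as X). *)
definition principle_Poss :: "'a set \<Rightarrow> 'a topology \<Rightarrow> bool" where
  "principle_Poss X T \<longleftrightarrow>
     (\<forall>\<F>. \<F> \<subseteq> Pow X \<longrightarrow>
        topspace T \<inter> (\<Inter>A\<in>\<F>. T closure_of A) = {} \<longrightarrow>
        (\<exists>\<G>. \<G> \<subseteq> \<F> \<and> finite \<G> \<and> X \<inter> \<Inter>\<G> = {}))"

end

theory Submission imports Defs begin

lemma te_basic: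
  assumes "topological_extension X T star"
  shows "t1_space T" "X \<subseteq> topspace T" "subtopology T X = discrete_topology X"
    "T closure_of X = topspace T"
    "\<And>f. f \<in> X \<rightarrow>\<^sub>E X \<Longrightarrow> continuous_map T T (star f)"
    "\<And>f x. f \<in> X \<rightarrow>\<^sub>E X \<Longrightarrow> x \<in> X \<Longrightarrow> star f x = f x"
  using assms unfolding topological_extension_def by auto

lemma cl_Int_X:
  assumes "topological_extension X T star" "A \<subseteq> X"
  shows "T closure_of A \<inter> X = A"
proof -
  have "subtopology T X closure_of A = X \<inter> T closure_of A"
    using closure_of_subtopology[of T X A] assms(2) by (simp add: Int_absorb1)
  moreover have "subtopology T X closure_of A = A"
    using te_basic(3)[OF assms(1)] discrete_topology_closure_of[of X A] assms(2) by auto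
  ultimately show ?thesis by blast
qed

lemma cl_disj:
  assumes te: "topological_extension X T star" and AX: "A \<subseteq> X"
  shows "T closure_of A \<inter> T closure_of (X - A) = {}"
proof (cases "\<exists>a b. a \<in> X \<and> b \<in> X \<and> a \<noteq> b")
  case True
  then obtain a b where ab: "a \<in> X" "b \<in> X" "a \<noteq> b" by blast
  define f where "f = restrict (\<lambda>x. if x \<in> A then a else b) X"
  have fE: "f \<in> X \<rightarrow>\<^sub>E X" using ab unfolding f_def by auto
  have c: "continuous_map T T (star f)" using te_basic(5)[OF te fE] .
  have sx: "\<forall>x\<in>X. star f x = f x" using te_basic(6)[OF te fE] by blast
  have t1: "t1_space T" by (rule te_basic(1)[OF te])
  have Xs: "X \<subseteq> topspace T" by (rule te_basic(2)[OF te])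
  have ca: "closedin T {a}" "closedin T {b}"
    using t1 ab(1,2) Xs by (simp_all add: t1_space_closedin_singleton subset_iff)
  have "star f ` A \<subseteq> {a}" using sx AX unfolding f_def by auto
  hence "T closure_of (star f ` A) \<subseteq> {a}"
    using ca(1) by (rule closure_of_minimal)
  hence 1: "star f ` (T closure_of A) \<subseteq> {a}"
    using continuous_map_image_closure_subset[OF c, of A] by blast
  have "star f ` (X - A) \<subseteq> {b}" using sx AX unfolding f_def by auto
  hence "T closure_of (star f ` (X - A)) \<subseteq> {b}"
    using ca(2) by (rule closure_of_minimal)
  hence 2: "star f ` (T closure_of (X - A)) \<subseteq> {b}"
    using continuous_map_image_closure_subset[OF c, of "X - A"] by blast
  show ?thesis
  proof (rule ccontr)
    assume "T closure_of A \<inter> T closure_of (X - A) \<noteq> {}"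
    then obtain \<xi> where "\<xi> \<in> T closure_of A" "\<xi> \<in> T closure_of (X - A)" by blast
    then have "star f \<xi> = a" "star f \<xi> = b" using 1 2 by blast+
    then show False using ab(3) by simp
  qed
next
  case False
  have "A = {} \<or> X - A = {}"
  proof (rule ccontr)
    assume "\<not> (A = {} \<or> X - A = {})"
    then obtain a b where "a \<in> A" "b \<in> X - A" by blast
    then show False using False AX by blast
  qed
  then show ?thesis by (metis Int_empty_left Int_empty_right closure_of_empty)
qed

lemma cl_Un:
  assumes te: "topological_extension X T star" and AX: "A \<subseteq> X"
  shows "T closure_of A \<union> T closure_of (X - A) = topspace T"
proof -
  have "A \<union> (X - A) = X" using AX by blast
  then show ?thesis using te_basic(4)[OF te] by (metis closure_of_Un)
qed

lemma cl_compl: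
  assumes te: "topological_extension X T star" and AX: "A \<subseteq> X"
  shows "topspace T - T closure_of A = T closure_of (X - A)"
  using cl_Un[OF assms] cl_disj[OF assms] closure_of_subset_topspace[of T "X - A"] by blast

lemma cl_open:
  assumes te: "topological_extension X T star" and AX: "A \<subseteq> X"
  shows "openin T (T closure_of A)"
proof -
  have "closedin T (T closure_of (X - A))" by simp
  hence "openin T (topspace T - T closure_of (X - A))" by auto
  moreover have "topspace T - T closure_of (X - A) = T closure_of A"
    using cl_compl[OF te, of "X - A"] AX by (simp add: Diff_Diff_Int Int_absorb1)
  ultimately show ?thesis by simp
qed

lemma cl_Int:
  assumes te: "topological_extension X T star" and "A \<subseteq> X" "B \<subseteq> X"
  shows "T closure_of (A \<inter> B) = T closure_of A \<inter> T closure_of B"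
proof
  show "T closure_of (A \<inter> B) \<subseteq> T closure_of A \<inter> T closure_of B"
    by (simp add: closure_of_mono)
  have "A = (A \<inter> B) \<union> (A - B)" by blast
  hence "T closure_of A = T closure_of (A \<inter> B) \<union> T closure_of (A - B)" by (metis closure_of_Un)
  moreover have "T closure_of (A - B) \<subseteq> T closure_of (X - B)" using assms by (intro closure_of_mono) blast
  ultimately show "T closure_of A \<inter> T closure_of B \<subseteq> T closure_of (A \<inter> B)"
    using cl_disj[OF te assms(3)] by blast
qed

lemma dense_open:
  assumes te: "topological_extension X T star" and "openin T V"
  shows "V \<subseteq> T closure_of (V \<inter> X)"
  using openin_Int_closure_of_subset[OF assms(2), of X] te_basic(4)[OF te] openin_subset[OF assms(2)]
  by auto

lemma S_topspace:
  assumes te: "topological_extension X T star"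
  shows "topspace (S_topology X T) = topspace T"
proof -
  have "\<Union>{T closure_of A | A. A \<subseteq> X} = topspace T"
  proof (rule equalityI)
    show "\<Union>{T closure_of A | A. A \<subseteq> X} \<subseteq> topspace T"
      using closure_of_subset_topspace[of T] by blast
    have "T closure_of X \<in> {T closure_of A | A. A \<subseteq> X}" by blast
    then have "T closure_of X \<subseteq> \<Union>{T closure_of A | A. A \<subseteq> X}" by (rule Union_upper)
    then show "topspace T \<subseteq> \<Union>{T closure_of A | A. A \<subseteq> X}"
      unfolding te_basic(4)[OF te] .
  qed
  then show ?thesis unfolding S_topology_def by (simp only: topology_generated_by_topspace)
qed

lemma S_open_T:
  assumes te: "topological_extension X T star" and "openin (S_topology X T) U"
  shows "openin T U"
proof -
  have "generate_topology_on {T closure_of A | A. A \<subseteq> X} U"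
    using assms(2) unfolding S_topology_def by (rule openin_topology_generated_by)
  then show ?thesis
    by induct (auto intro: cl_open[OF te])
qed

lemma S_open_base:
  assumes te: "topological_extension X T star" and "openin (S_topology X T) U" "\<xi> \<in> U"
  shows "\<exists>A. A \<subseteq> X \<and> \<xi> \<in> T closure_of A \<and> T closure_of A \<subseteq> U"
proof -
  have "generate_topology_on {T closure_of A | A. A \<subseteq> X} U"
    using assms(2) unfolding S_topology_def by (rule openin_topology_generated_by)
  then show ?thesis using assms(3)
  proof (induct arbitrary: \<xi>)
    case (Int a b)
    then obtain A B where "A \<subseteq> X" "\<xi> \<in> T closure_of A" "T closure_of A \<subseteq> a"
       "B \<subseteq> X" "\<xi> \<in> T closure_of B" "T closure_of B \<subseteq> b" by (meson IntD1 IntD2)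
    then show ?case using cl_Int[OF te, of A B] by (intro exI[of _ "A \<inter> B"]) auto
  next
    case (UN K)
    from UN(3) obtain k where k: "k \<in> K" "\<xi> \<in> k" by (rule UnionE)
    obtain A where "A \<subseteq> X" "\<xi> \<in> T closure_of A" "T closure_of A \<subseteq> k"
      using UN(2)[OF k] by blast
    then show ?case using k by blast
  qed auto
qed

lemma S_basic_open:
  "A \<subseteq> X \<Longrightarrow> openin (S_topology X T) (T closure_of A)"
  unfolding S_topology_def by (rule topology_generated_by_Basis) blast

lemma Ind_iff_Hausdorff:
  assumes te: "topological_extension X T star"
  shows "principle_Ind X T \<longleftrightarrow> Hausdorff_space T"
proof
  assume I: "principle_Ind X T"
  show "Hausdorff_space T" unfolding Hausdorff_space_def
  proof (intro allI impI)
    fix x y assume h: "x \<in> topspace T \<and> y \<in> topspace T \<and> x \<noteq> y"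
    then obtain A where A: "A \<subseteq> X" "x \<in> T closure_of A" "y \<notin> T closure_of A"
      using I unfolding principle_Ind_def by blast
    have "y \<in> T closure_of (X - A)" using cl_Un[OF te A(1), THEN equalityD2] A(3) h by blast
    then show "\<exists>U V. openin T U \<and> openin T V \<and> x \<in> U \<and> y \<in> V \<and> disjnt U V"
    proof -
      assume y: "y \<in> T closure_of (X - A)"
      have o1: "openin T (T closure_of A)" by (rule cl_open[OF te A(1)])
      have o2: "openin T (T closure_of (X - A))" by (rule cl_open[OF te]) blast
      have d: "disjnt (T closure_of A) (T closure_of (X - A))"
        using cl_disj[OF te A(1)] by (simp add: disjnt_def)
      show ?thesis using o1 o2 d y A(2) by blast
    qed
  qed
next
  assume H: "Hausdorff_space T"
  show "principle_Ind X T" unfolding principle_Ind_def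
  proof (intro ballI impI)
    fix x y assume h: "x \<in> topspace T" "y \<in> topspace T" "x \<noteq> y"
    then obtain U V where UV: "openin T U" "openin T V" "x \<in> U" "y \<in> V" "disjnt U V"
      using H unfolding Hausdorff_space_def by blast
    have "x \<in> T closure_of (U \<inter> X)" using dense_open[OF te UV(1)] UV(3) by blast
    moreover have "y \<notin> T closure_of (U \<inter> X)"
    proof
      assume "y \<in> T closure_of (U \<inter> X)"
      then have y1: "y \<in> V \<inter> T closure_of (U \<inter> X)" using UV by blast
      have s1: "V \<inter> T closure_of (U \<inter> X) \<subseteq> T closure_of (V \<inter> (U \<inter> X))" by (rule openin_Int_closure_of_subset[OF UV(2)])
      have e: "V \<inter> (U \<inter> X) = {}" using UV(5) by (auto simp: disjnt_def)
      show False using y1 s1 unfolding e closure_of_empty by blast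
    qed
    ultimately show "\<exists>A. A \<subseteq> X \<and> x \<in> T closure_of A \<and> y \<notin> T closure_of A"
      by (intro exI[of _ "U \<inter> X"]) auto
  qed
qed

lemma Ind_iff_Hausdorff_S:
  assumes te: "topological_extension X T star"
  shows "principle_Ind X T \<longleftrightarrow> Hausdorff_space (S_topology X T)"
proof
  assume I: "principle_Ind X T"
  show "Hausdorff_space (S_topology X T)" unfolding Hausdorff_space_def S_topspace[OF te]
  proof (intro allI impI)
    fix x y assume h: "x \<in> topspace T \<and> y \<in> topspace T \<and> x \<noteq> y"
    then obtain A where A: "A \<subseteq> X" "x \<in> T closure_of A" "y \<notin> T closure_of A"
      using I unfolding principle_Ind_def by blast
    have "y \<in> T closure_of (X - A)" using cl_Un[OF te A(1), THEN equalityD2] A(3) h by blast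
    then show "\<exists>U V. openin (S_topology X T) U \<and> openin (S_topology X T) V \<and> x \<in> U \<and> y \<in> V \<and> disjnt U V"
    proof -
      assume y: "y \<in> T closure_of (X - A)"
      have o1: "openin (S_topology X T) (T closure_of A)" by (rule S_basic_open[OF A(1)])
      have o2: "openin (S_topology X T) (T closure_of (X - A))" by (rule S_basic_open) blast
      have d: "disjnt (T closure_of A) (T closure_of (X - A))"
        using cl_disj[OF te A(1)] by (simp add: disjnt_def)
      show ?thesis using o1 o2 d y A(2) by blast
    qed
  qed
next
  assume H: "Hausdorff_space (S_topology X T)"
  have "Hausdorff_space T" unfolding Hausdorff_space_def
  proof (intro allI impI)
    fix x y assume h: "x \<in> topspace T \<and> y \<in> topspace T \<and> x \<noteq> y"
    then obtain U V where "openin (S_topology X T) U" "openin (S_topology X T) V" "x \<in> U" "y \<in> V" "disjnt U V"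
      using H unfolding Hausdorff_space_def S_topspace[OF te] by blast
    then show "\<exists>U V. openin T U \<and> openin T V \<and> x \<in> U \<and> y \<in> V \<and> disjnt U V"
      using S_open_T[OF te] by blast
  qed
  then show "principle_Ind X T" using Ind_iff_Hausdorff[OF te] by simp
qed

lemma S_cont:
  assumes te: "topological_extension X T star" and fE: "f \<in> X \<rightarrow>\<^sub>E X"
  shows "continuous_map (S_topology X T) (S_topology X T) (star f)"
proof -
  have c: "continuous_map T T (star f)" using te_basic(5)[OF te fE] .
  have sx: "\<forall>x\<in>X. star f x = f x" using te_basic(6)[OF te fE] by blast
  have pre: "star f -` (T closure_of A) \<inter> topspace T = T closure_of (X \<inter> f -` A)" if AX: "A \<subseteq> X" for A
  proof -
    let ?B = "X \<inter> f -` A"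
    have BX: "?B \<subseteq> X" by blast
    have "star f ` ?B \<subseteq> A" using sx by auto
    hence "T closure_of (star f ` ?B) \<subseteq> T closure_of A" by (rule closure_of_mono)
    hence 1: "star f ` (T closure_of ?B) \<subseteq> T closure_of A"
      using continuous_map_image_closure_subset[OF c, of ?B] by (rule order_trans[rotated])
    have "star f ` (X - ?B) \<subseteq> X - A" using sx fE by auto
    hence "T closure_of (star f ` (X - ?B)) \<subseteq> T closure_of (X - A)" by (rule closure_of_mono)
    hence 2: "star f ` (T closure_of (X - ?B)) \<subseteq> T closure_of (X - A)"
      using continuous_map_image_closure_subset[OF c, of "X - ?B"] by (rule order_trans[rotated])
    have U: "T closure_of ?B \<union> T closure_of (X - ?B) = topspace T" by (rule cl_Un[OF te BX])
    have D: "T closure_of A \<inter> T closure_of (X - A) = {}" by (rule cl_disj[OF te AX])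
    show ?thesis
    proof (intro equalityI subsetI)
      fix \<xi> assume "\<xi> \<in> star f -` (T closure_of A) \<inter> topspace T"
      then have a: "star f \<xi> \<in> T closure_of A" "\<xi> \<in> topspace T" by auto
      show "\<xi> \<in> T closure_of ?B"
      proof (rule ccontr)
        assume "\<xi> \<notin> T closure_of ?B"
        then have "\<xi> \<in> T closure_of (X - ?B)" using U[THEN equalityD2] a(2) \<open>\<xi> \<notin> T closure_of ?B\<close> by blast
        then have "star f \<xi> \<in> T closure_of (X - A)" using 2 by blast
        then show False using D a(1) by blast
      qed
    next
      fix \<xi> assume b: "\<xi> \<in> T closure_of ?B"
      then have "\<xi> \<in> topspace T" using U[THEN equalityD1] by blast
      moreover have "star f \<xi> \<in> T closure_of A" using 1 b by blast
      ultimately show "\<xi> \<in> star f -` (T closure_of A) \<inter> topspace T" by blast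
    qed
  qed
  show ?thesis
    unfolding S_topology_def
  proof (rule continuous_on_generated_topo)
    fix U assume "U \<in> {T closure_of A |A. A \<subseteq> X}"
    then obtain A where A: "A \<subseteq> X" "U = T closure_of A" by blast
    show "openin (topology_generated_by {T closure_of A |A. A \<subseteq> X}) (star f -` U \<inter> topspace (topology_generated_by {T closure_of A |A. A \<subseteq> X}))"
      using S_topspace[OF te] pre[OF A(1)] A(2) S_basic_open[of "X \<inter> f -` A" X T]
      unfolding S_topology_def by auto
  next
    show "star f ` topspace (topology_generated_by {T closure_of A |A. A \<subseteq> X}) \<subseteq> \<Union> {T closure_of A |A. A \<subseteq> X}"
      using S_topspace[OF te] continuous_map_image_subset_topspace[OF c] unfolding S_topology_def by simp
  qed
qed


lemma Poss_imp_compact: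
  assumes te: "topological_extension X T star" and P: "principle_Poss X T"
  shows "compact_space (S_topology X T)"
  unfolding compact_space_alt
proof (intro allI impI)
  fix \<U> assume h: "(\<forall>U\<in>\<U>. openin (S_topology X T) U) \<and> topspace (S_topology X T) \<subseteq> \<Union>\<U>"
  have Uo: "\<And>U. U \<in> \<U> \<Longrightarrow> openin (S_topology X T) U" using h by blast
  have cov: "topspace T \<subseteq> \<Union>\<U>" using h unfolding S_topspace[OF te] by blast
  define F where "F = {X - A | A. A \<subseteq> X \<and> (\<exists>U\<in>\<U>. T closure_of A \<subseteq> U)}"
  have FP: "F \<subseteq> Pow X" unfolding F_def by blast
  have emp: "topspace T \<inter> (\<Inter>B\<in>F. T closure_of B) = {}"
  proof (rule ccontr)
    assume "topspace T \<inter> (\<Inter>B\<in>F. T closure_of B) \<noteq> {}"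
    then obtain \<xi> where \<xi>: "\<xi> \<in> topspace T" "\<And>B. B \<in> F \<Longrightarrow> \<xi> \<in> T closure_of B" by blast
    obtain U where U: "U \<in> \<U>" "\<xi> \<in> U" using cov \<xi>(1) by blast
    obtain A where A: "A \<subseteq> X" "\<xi> \<in> T closure_of A" "T closure_of A \<subseteq> U"
      using S_open_base[OF te Uo[OF U(1)] U(2)] by blast
    have "X - A \<in> F" unfolding F_def using A(1,3) U(1) by blast
    then have "\<xi> \<in> T closure_of (X - A)" by (rule \<xi>(2))
    then show False using A(2) cl_disj[OF te A(1)] by blast
  qed
  obtain G where G: "G \<subseteq> F" "finite G" "X \<inter> \<Inter>G = {}"
    using P[unfolded principle_Poss_def, rule_format, OF FP emp] by blast
  have "\<forall>B\<in>G. \<exists>U. U \<in> \<U> \<and> T closure_of (X - B) \<subseteq> U"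
  proof
    fix B assume "B \<in> G"
    then have "B \<in> F" using G(1) by blast
    then obtain A U where AU: "B = X - A" "A \<subseteq> X" "U \<in> \<U>" "T closure_of A \<subseteq> U"
      unfolding F_def by blast
    have "X - B = A" using AU(1,2) by blast
    then show "\<exists>U. U \<in> \<U> \<and> T closure_of (X - B) \<subseteq> U" using AU(3,4) by blast
  qed
  then have "\<exists>u. \<forall>B\<in>G. u B \<in> \<U> \<and> T closure_of (X - B) \<subseteq> u B" by (rule bchoice)
  then obtain u where u': "\<forall>B\<in>G. u B \<in> \<U> \<and> T closure_of (X - B) \<subseteq> u B" by (elim exE)
  have u: "\<And>B. B \<in> G \<Longrightarrow> u B \<in> \<U> \<and> T closure_of (X - B) \<subseteq> u B" using u' by blast
  have XU: "X \<subseteq> \<Union>((\<lambda>B. X - B) ` G)" using G(3) by blast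
  have "topspace T = T closure_of X" using te_basic(4)[OF te] by simp
  also have "\<dots> \<subseteq> T closure_of (\<Union>((\<lambda>B. X - B) ` G))" using XU by (rule closure_of_mono)
  also have "\<dots> = (\<Union>S\<in>(\<lambda>B. X - B) ` G. T closure_of S)"
    using G(2) by (intro closure_of_Union) simp
  also have "\<dots> \<subseteq> \<Union>(u ` G)" using u by blast
  finally have "topspace T \<subseteq> \<Union>(u ` G)" .
  then show "\<exists>\<F>. finite \<F> \<and> \<F> \<subseteq> \<U> \<and> topspace (S_topology X T) \<subseteq> \<Union>\<F>"
    using G(2) u unfolding S_topspace[OF te] by (intro exI[of _ "u ` G"]) blast
qed

lemma compact_imp_Poss:
  assumes te: "topological_extension X T star" and C: "compact_space (S_topology X T)"
  shows "principle_Poss X T"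
  unfolding principle_Poss_def
proof (intro allI impI)
  fix F assume FP: "F \<subseteq> Pow X" and emp: "topspace T \<inter> (\<Inter>A\<in>F. T closure_of A) = {}"
  let ?U = "(\<lambda>A. T closure_of (X - A)) ` F"
  have Uo: "\<forall>U\<in>?U. openin (S_topology X T) U"
  proof
    fix U assume "U \<in> ?U"
    then obtain A where "U = T closure_of (X - A)" by blast
    then show "openin (S_topology X T) U" using S_basic_open[of "X - A" X T] by blast
  qed
  have cov: "topspace (S_topology X T) \<subseteq> \<Union>?U"
  proof
    fix \<xi> assume "\<xi> \<in> topspace (S_topology X T)"
    then have \<xi>: "\<xi> \<in> topspace T" unfolding S_topspace[OF te] .
    then obtain A where A: "A \<in> F" "\<xi> \<notin> T closure_of A" using emp by blast
    have AX: "A \<subseteq> X" using A(1) FP by blast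
    have "\<xi> \<in> T closure_of (X - A)" using cl_Un[OF te AX, THEN equalityD2] \<xi> A(2) by blast
    then show "\<xi> \<in> \<Union>?U" using A(1) by blast
  qed
  obtain V where V: "finite V" "V \<subseteq> ?U" "topspace (S_topology X T) \<subseteq> \<Union>V"
    using C[unfolded compact_space_alt, rule_format, OF conjI[OF Uo cov]] by blast
  obtain G where G: "G \<subseteq> F" "finite G" "V = (\<lambda>A. T closure_of (X - A)) ` G"
    using finite_subset_image[OF V(1,2)] by blast
  have "X \<inter> \<Inter>G = {}"
  proof (rule ccontr)
    assume "X \<inter> \<Inter>G \<noteq> {}"
    then obtain x where x: "x \<in> X" "\<And>A. A \<in> G \<Longrightarrow> x \<in> A" by blast
    have "x \<in> topspace T" using x(1) te_basic(2)[OF te] by blast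
    then have "x \<in> \<Union>V" using V(3) unfolding S_topspace[OF te] by blast
    then obtain A where A: "A \<in> G" "x \<in> T closure_of (X - A)" using G(3) by blast
    have AX: "A \<subseteq> X" using A(1) G(1) FP by blast
    have "A \<subseteq> topspace T" using AX te_basic(2)[OF te] by blast
    then have "A \<subseteq> T closure_of A" by (rule closure_of_subset)
    then have "x \<in> T closure_of A" using x(2)[OF A(1)] by blast
    then show False using A(2) cl_disj[OF te AX] by blast
  qed
  then show "\<exists>G. G \<subseteq> F \<and> finite G \<and> X \<inter> \<Inter>G = {}" using G(1,2) by blast
qed

lemma regular_T_open_S:
  assumes te: "topological_extension X T star" and R: "regular_space T" and U: "openin T U"
  shows "openin (S_topology X T) U"
proof (subst openin_subopen, intro ballI)
  fix \<xi> assume \<xi>: "\<xi> \<in> U"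
  have cl: "closedin T (topspace T - U)" using U by blast
  have \<xi>t: "\<xi> \<in> topspace T - (topspace T - U)" using \<xi> openin_subset[OF U] by blast
  obtain V where V: "openin T V" "\<xi> \<in> V" "disjnt (topspace T - U) (T closure_of V)"
    using R cl \<xi>t unfolding regular_space by blast
  have "T closure_of V \<subseteq> topspace T" by (rule closure_of_subset_topspace)
  then have clV: "T closure_of V \<subseteq> U" using V(3) by (auto simp: disjnt_def)
  have "T closure_of (V \<inter> X) \<subseteq> T closure_of V" by (rule closure_of_mono) blast
  then have 1: "T closure_of (V \<inter> X) \<subseteq> U" using clV by blast
  have 2: "\<xi> \<in> T closure_of (V \<inter> X)" using dense_open[OF te V(1)] V(2) by blast
  have 3: "openin (S_topology X T) (T closure_of (V \<inter> X))" by (rule S_basic_open) blast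
  show "\<exists>W. openin (S_topology X T) W \<and> \<xi> \<in> W \<and> W \<subseteq> U" using 1 2 3 by blast
qed

lemma regular_S_eq_T:
  assumes te: "topological_extension X T star" and R: "regular_space T"
  shows "S_topology X T = T"
  unfolding topology_eq using regular_T_open_S[OF te R] S_open_T[OF te] by blast

theorem corollary1p3:
  fixes X :: "'a set" and T :: "'a topology" and star :: "('a \<Rightarrow> 'a) \<Rightarrow> ('a \<Rightarrow> 'a)"
  assumes "topological_extension X T star"
  shows "(principle_Ind X T \<longleftrightarrow> Hausdorff_space T)
    \<and> (principle_Poss X T \<longleftrightarrow> compact_space (S_topology X T))
    \<and> (principle_Ind X T \<and> principle_Poss X T \<longleftrightarrow>
         Hausdorff_space (S_topology X T) \<and> compact_space (S_topology X T))
    \<and> (principle_Ind X T \<and> principle_Poss X T \<longrightarrow>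
         ((Hausdorff_space T \<and> compact_space T) \<or> \<not> regular_space T)
         \<and> (\<forall>U. openin (S_topology X T) U \<longrightarrow> openin T U)
         \<and> Hausdorff_space (S_topology X T) \<and> compact_space (S_topology X T)
         \<and> (\<forall>f \<in> X \<rightarrow>\<^sub>E X. continuous_map (S_topology X T) (S_topology X T) (star f)))"
proof -
  note te = assms
  have i1: "principle_Ind X T \<longleftrightarrow> Hausdorff_space T" by (rule Ind_iff_Hausdorff[OF te])
  have i2: "principle_Poss X T \<longleftrightarrow> compact_space (S_topology X T)"
    using Poss_imp_compact[OF te] compact_imp_Poss[OF te] by blast
  have i3: "principle_Ind X T \<longleftrightarrow> Hausdorff_space (S_topology X T)" by (rule Ind_iff_Hausdorff_S[OF te])
  have i4: "(Hausdorff_space T \<and> compact_space T) \<or> \<not> regular_space T"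
    if "principle_Ind X T" "principle_Poss X T"
  proof (cases "regular_space T")
    case True
    then have "S_topology X T = T" by (rule regular_S_eq_T[OF te])
    then show ?thesis using that i1 i2 by simp
  qed simp
  have i5: "\<forall>U. openin (S_topology X T) U \<longrightarrow> openin T U" using S_open_T[OF te] by blast
  have i6: "\<forall>f \<in> X \<rightarrow>\<^sub>E X. continuous_map (S_topology X T) (S_topology X T) (star f)"
    using S_cont[OF te] by blast
  show ?thesis using i1 i2 i3 i4 i5 i6 by blast
qed

end
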